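(* Let $m\ge 2$, let $A\in\mathbb{R}^{m\times m}$ be a symmetric matrix with zero diagonal and nonnegative entries, and let $k\in\{1,\ldots,\lfloor m/2\rfloor\}$. Let $A_k$ be the $(2m-2k)\times(2m-2k)$ symmetric matrix with zero diagonal given in block form by \[ A_k:=\begin{bmatrix} A & \mathbf{1}_{m,m-2k}\\ \mathbf{1}_{m-2k,m} & \mathbf{0}\end{bmatrix}, \] where $\mathbf{1}_{p,q}$ is the $p\times q$ matrix all of whose entries equal $1$ and $\mathbf{0}$ is the $(m-2k)\times(m-2k)$ zero matrix. Then \[ \mathrm{haf}_k A=\frac{\mathrm{haf}\, A_k}{(m-2k)!}. \]
   Context: For a real symmetric $2n\times 2n$ matrix $C=[c_{ij}]$, let $\mathcal{M}(K_{2n})$ be the set of perfect matchings of the complete graph on $\{1,\ldots,2n\}$, each written as $\{(i_1,j_1),\ldots,(i_n,j_n)\}$ with $i_l<j_l$; the hafnian is $\mathrm{haf}\, C:=\sum_{\{(i_1,j_1),\ldots,(i_n,j_n)\}\in\mathcal{M}(K_{2n})}\prod_{l=1}^n c_{i_lj_l}$ (and $\mathrm{haf}$ of the empty $0\times 0$ matrix is $1$). For $1\le 2k\le m$, $Q_{2k,m}$ is the set of $2k$-element subsets $\alpha=\{\alpha_1<\cdots<\alpha_{2k}\}$ of $\{1,\ldots,m\}$, $A[\alpha,\alpha]:=[a_{\alpha_i\alpha_j}]_{i,j=1}^{2k}$, and $\mathrm{haf}_k A:=\sum_{\alpha\in Q_{2k,m}}\mathrm{haf}\, A[\alpha,\alpha]$.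 *)

theory Defs
  imports Complex_Main
begin

text \<open>Matrices are functions nat => nat => real, indexed from 1; the size is carried explicitly.\<close>

definition perfect_matchings :: "nat set \<Rightarrow> (nat \<times> nat) set set" where
  "perfect_matchings S =
     {M. M \<subseteq> {(i, j). i \<in> S \<and> j \<in> S \<and> i < j} \<and>
         (\<forall>x\<in>S. \<exists>!p. p \<in> M \<and> (fst p = x \<or> snd p = x))}"

definition haf :: "nat \<Rightarrow> (nat \<Rightarrow> nat \<Rightarrow> real) \<Rightarrow> real" where
  "haf n C = (\<Sum>M\<in>perfect_matchings {1..n}. \<Prod>p\<in>M. C (fst p) (snd p))"

definition principal_submatrix :: "(nat \<Rightarrow> nat \<Rightarrow> real) \<Rightarrow> nat set \<Rightarrow> nat \<Rightarrow> nat \<Rightarrow> real" where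
  "principal_submatrix A \<alpha> i j =
     A (sorted_list_of_set \<alpha> ! (i - 1)) (sorted_list_of_set \<alpha> ! (j - 1))"

definition Q_sets :: "nat \<Rightarrow> nat \<Rightarrow> nat set set" where
  "Q_sets r m = {\<alpha>. \<alpha> \<subseteq> {1..m} \<and> card \<alpha> = r}"

definition haf_k :: "nat \<Rightarrow> nat \<Rightarrow> (nat \<Rightarrow> nat \<Rightarrow> real) \<Rightarrow> real" where
  "haf_k m k A = (\<Sum>\<alpha>\<in>Q_sets (2 * k) m. haf (2 * k) (principal_submatrix A \<alpha>))"

definition block_Ak :: "nat \<Rightarrow> (nat \<Rightarrow> nat \<Rightarrow> real) \<Rightarrow> nat \<Rightarrow> nat \<Rightarrow> real" where
  "block_Ak m A i j =
     (if i \<le> m \<and> j \<le> m then A i j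
      else if i \<le> m \<or> j \<le> m then 1 else 0)"

end

theory Submission
  imports Defs
begin


definition hafS :: "(nat \<Rightarrow> nat \<Rightarrow> real) \<Rightarrow> nat set \<Rightarrow> real" where
  "hafS C S = (\<Sum>M\<in>perfect_matchings S. \<Prod>p\<in>M. C (fst p) (snd p))"

lemma haf_hafS: "haf n C = hafS C {1..n}"
  by (simp add: haf_def hafS_def)

lemma pm_D1: "M \<in> perfect_matchings S \<Longrightarrow> M \<subseteq> {(i, j). i \<in> S \<and> j \<in> S \<and> i < j}"
  unfolding perfect_matchings_def by (drule CollectD) (erule conjunct1)

lemma pm_D2: "M \<in> perfect_matchings S \<Longrightarrow> \<forall>y\<in>S. \<exists>!p. p \<in> M \<and> (fst p = y \<or> snd p = y)"
  unfolding perfect_matchings_def by (drule CollectD) (erule conjunct2)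

lemma pm_sub: "M \<in> perfect_matchings S \<Longrightarrow> M \<subseteq> S \<times> S"
  unfolding perfect_matchings_def by auto

lemma pm_finite: "finite S \<Longrightarrow> finite (perfect_matchings S)"
  by (rule finite_subset[of _ "Pow (S \<times> S)"]) (auto dest: pm_sub)

lemma pm_elem_finite: "finite S \<Longrightarrow> M \<in> perfect_matchings S \<Longrightarrow> finite M"
  using pm_sub finite_subset by blast

lemma pm_empty: "perfect_matchings {} = {{}}"
  unfolding perfect_matchings_def by auto

lemma ex1_obt:
  assumes "\<exists>!x. P x"
  obtains x where "P x" "\<And>y. P y \<Longrightarrow> y = x"
  using assms by (elim ex1E) blast

lemma ex1_uniq: "\<exists>!x. P x \<Longrightarrow> P a \<Longrightarrow> P b \<Longrightarrow> a = b"
  by (elim ex1E) blast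

lemma pm_expand:
  assumes fin: "finite S" and xS: "x \<in> S" and mx: "\<forall>y\<in>S. y \<le> x"
  shows "perfect_matchings S = (\<Union>j\<in>S-{x}. insert (j,x) ` perfect_matchings (S - {x,j}))"
proof (intro equalityI subsetI)
  fix M assume M: "M \<in> perfect_matchings S"
  have Msub: "M \<subseteq> {(i, j). i \<in> S \<and> j \<in> S \<and> i < j}" by (rule pm_D1[OF M])
  have uq: "\<forall>y\<in>S. \<exists>!p. p \<in> M \<and> (fst p = y \<or> snd p = y)" by (rule pm_D2[OF M])
  have ux: "\<exists>!p. p \<in> M \<and> (fst p = x \<or> snd p = x)" using bspec[OF uq xS] .
  obtain p where p0: "p \<in> M \<and> (fst p = x \<or> snd p = x)"
    and pu0: "\<And>q. q \<in> M \<and> (fst q = x \<or> snd q = x) \<Longrightarrow> q = p"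
    by (rule ex1_obt[OF ux]) (rule that; assumption)
  have p: "p \<in> M" "fst p = x \<or> snd p = x" using p0 by auto
  have pu: "\<And>q. q \<in> M \<Longrightarrow> fst q = x \<or> snd q = x \<Longrightarrow> q = p" using pu0 by blast
  obtain a b where pab: "p = (a, b)" "a \<in> S" "b \<in> S" "a < b"
    using p(1) Msub by blast
  have "b \<le> x" using mx pab by blast
  then have "b = x" using p(2) pab by auto
  then obtain j where pj: "p = (j, x)" "j \<in> S" "j < x"
    using pab by blast
  have ju: "q = p" if "q \<in> M" "fst q = j \<or> snd q = j" for q
  proof -
    have uj: "\<exists>!p. p \<in> M \<and> (fst p = j \<or> snd p = j)" using bspec[OF uq pj(2)] .
    show ?thesis by (rule ex1_uniq[OF uj]) (use that p pj in auto)
  qed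
  define M' where "M' = M - {p}"
  have "M' \<in> perfect_matchings (S - {x, j})"
    unfolding perfect_matchings_def
  proof (intro CollectI conjI ballI)
    show "M' \<subseteq> {(i, ja). i \<in> S - {x, j} \<and> ja \<in> S - {x, j} \<and> i < ja}"
    proof
      fix q assume q: "q \<in> M'"
      then have qM: "q \<in> M" and qp: "q \<noteq> p" by (auto simp: M'_def)
      then obtain a b where ab: "q = (a, b)" "a \<in> S" "b \<in> S" "a < b" using Msub by blast
      have "a \<noteq> x" "b \<noteq> x" "a \<noteq> j" "b \<noteq> j"
        using pu[OF qM] ju[OF qM] qp ab(1) by auto
      then show "q \<in> {(i, ja). i \<in> S - {x, j} \<and> ja \<in> S - {x, j} \<and> i < ja}"
        using ab by blast
    qed
  next
    fix y assume y: "y \<in> S - {x, j}"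
    then have yS: "y \<in> S" by blast
    have uy: "\<exists>!p. p \<in> M \<and> (fst p = y \<or> snd p = y)" using bspec[OF uq yS] .
    obtain q where q0: "q \<in> M \<and> (fst q = y \<or> snd q = y)"
      and qu0: "\<And>r. r \<in> M \<and> (fst r = y \<or> snd r = y) \<Longrightarrow> r = q"
      by (rule ex1_obt[OF uy]) (rule that; assumption)
    have q: "q \<in> M" "fst q = y \<or> snd q = y" using q0 by auto
    have qu: "\<And>r. r \<in> M \<Longrightarrow> fst r = y \<or> snd r = y \<Longrightarrow> r = q" using qu0 by blast
    have "q \<noteq> p" using q y pj by auto
    show "\<exists>!p. p \<in> M' \<and> (fst p = y \<or> snd p = y)"
    proof (rule ex1I[of _ q])
      show "q \<in> M' \<and> (fst q = y \<or> snd q = y)" using q \<open>q \<noteq> p\<close> by (simp add: M'_def)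
      fix r assume "r \<in> M' \<and> (fst r = y \<or> snd r = y)"
      then show "r = q" using qu by (simp add: M'_def)
    qed
  qed
  moreover have "M = insert (j, x) M'" using p pj M'_def by auto
  ultimately show "M \<in> (\<Union>j\<in>S-{x}. insert (j,x) ` perfect_matchings (S - {x,j}))"
    using pj by auto
next
  fix M assume "M \<in> (\<Union>j\<in>S-{x}. insert (j,x) ` perfect_matchings (S - {x,j}))"
  then obtain j M' where j: "j \<in> S" "j \<noteq> x" and M: "M = insert (j, x) M'"
    and M': "M' \<in> perfect_matchings (S - {x, j})" by auto
  have Msub: "M' \<subseteq> {(i, ja). i \<in> S - {x, j} \<and> ja \<in> S - {x, j} \<and> i < ja}" by (rule pm_D1[OF M'])
  have uq: "\<forall>y\<in>S - {x, j}. \<exists>!p. p \<in> M' \<and> (fst p = y \<or> snd p = y)" by (rule pm_D2[OF M'])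
  have jx: "j < x" using j mx by force
  have Mo: "fst r \<notin> {x, j} \<and> snd r \<notin> {x, j}" if "r \<in> M'" for r
    using subsetD[OF Msub that] by (cases r) auto
  show "M \<in> perfect_matchings S"
    unfolding perfect_matchings_def
  proof (intro CollectI conjI ballI)
    show "M \<subseteq> {(i, j). i \<in> S \<and> j \<in> S \<and> i < j}"
    proof
      fix r assume "r \<in> M"
      then have "r = (j, x) \<or> r \<in> M'" using M by simp
      then show "r \<in> {(i, j). i \<in> S \<and> j \<in> S \<and> i < j}"
        using Msub j jx xS by blast
    qed
  next
    fix y assume y: "y \<in> S"
    show "\<exists>!p. p \<in> M \<and> (fst p = y \<or> snd p = y)"
    proof (cases "y = x \<or> y = j")
      case True
      show ?thesis
      proof (rule ex1I[of _ "(j, x)"])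
        show "(j, x) \<in> M \<and> (fst (j, x) = y \<or> snd (j, x) = y)" using M True by auto
        fix r assume r: "r \<in> M \<and> (fst r = y \<or> snd r = y)"
        show "r = (j, x)"
        proof (rule ccontr)
          assume "r \<noteq> (j, x)"
          then have "r \<in> M'" using r M by simp
          then show False using Mo r True by blast
        qed
      qed
    next
      case False
      then have "y \<in> S - {x, j}" using y by auto
      then have uy: "\<exists>!p. p \<in> M' \<and> (fst p = y \<or> snd p = y)" by (rule bspec[OF uq])
      obtain q where q0: "q \<in> M' \<and> (fst q = y \<or> snd q = y)"
        and qu0: "\<And>r. r \<in> M' \<and> (fst r = y \<or> snd r = y) \<Longrightarrow> r = q"
        by (rule ex1_obt[OF uy]) (rule that; assumption)
      have q: "q \<in> M'" "fst q = y \<or> snd q = y" using q0 by auto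
      have qu: "\<And>r. r \<in> M' \<Longrightarrow> fst r = y \<or> snd r = y \<Longrightarrow> r = q" using qu0 by blast
      show ?thesis
      proof (rule ex1I[of _ q])
        show "q \<in> M \<and> (fst q = y \<or> snd q = y)" using q M by simp
        fix r assume r: "r \<in> M \<and> (fst r = y \<or> snd r = y)"
        then have "r \<in> M'" using M False by auto
        then show "r = q" using qu r by simp
      qed
    qed
  qed
qed

lemma hafS_expand:
  assumes fin: "finite S" and xS: "x \<in> S" and mx: "\<forall>y\<in>S. y \<le> x"
  shows "hafS C S = (\<Sum>j\<in>S-{x}. C j x * hafS C (S - {x, j}))"
proof -
  have nin: "(j, x) \<notin> M'" if "M' \<in> perfect_matchings (S - {x, j})" for j M'
    using pm_sub[OF that] by auto
  have "hafS C S = (\<Sum>j\<in>S-{x}. \<Sum>M\<in>insert (j,x) ` perfect_matchings (S - {x,j}). \<Prod>p\<in>M. C (fst p) (snd p))"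
    unfolding hafS_def pm_expand[OF assms]
  proof (rule sum.UNION_disjoint)
    show "finite (S - {x})" using fin by auto
    show "\<forall>j\<in>S - {x}. finite (insert (j, x) ` perfect_matchings (S - {x, j}))"
      using fin pm_finite by auto
    show "\<forall>i\<in>S - {x}. \<forall>j\<in>S - {x}. i \<noteq> j \<longrightarrow>
      insert (i, x) ` perfect_matchings (S - {x, i}) \<inter> insert (j, x) ` perfect_matchings (S - {x, j}) = {}"
    proof (intro ballI impI)
      fix i j assume "i \<in> S - {x}" "j \<in> S - {x}" "i \<noteq> j"
      show "insert (i, x) ` perfect_matchings (S - {x, i}) \<inter> insert (j, x) ` perfect_matchings (S - {x, j}) = {}"
      proof (rule ccontr)
        assume "\<not> ?thesis"
        then obtain M1 M2 where "M1 \<in> perfect_matchings (S - {x, i})" "M2 \<in> perfect_matchings (S - {x, j})"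
          "insert (i, x) M1 = insert (j, x) M2" by blast
        then show False using pm_sub \<open>i \<noteq> j\<close> by blast
      qed
    qed
  qed
  also have "\<dots> = (\<Sum>j\<in>S-{x}. C j x * hafS C (S - {x, j}))"
  proof (rule sum.cong[OF refl])
    fix j assume j: "j \<in> S - {x}"
    have inj: "inj_on (insert (j, x)) (perfect_matchings (S - {x, j}))"
      using nin by (intro inj_onI) (metis insert_ident)
    have "(\<Sum>M\<in>insert (j,x) ` perfect_matchings (S - {x,j}). \<Prod>p\<in>M. C (fst p) (snd p))
        = (\<Sum>M\<in>perfect_matchings (S - {x,j}). \<Prod>p\<in>insert (j,x) M. C (fst p) (snd p))"
      by (simp add: sum.reindex[OF inj])
    also have "\<dots> = (\<Sum>M\<in>perfect_matchings (S - {x,j}). C j x * (\<Prod>p\<in>M. C (fst p) (snd p)))"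
    proof (rule sum.cong[OF refl])
      fix M assume MM: "M \<in> perfect_matchings (S - {x,j})"
      show "(\<Prod>p\<in>insert (j,x) M. C (fst p) (snd p)) = C j x * (\<Prod>p\<in>M. C (fst p) (snd p))"
        by (simp only: prod.insert[OF pm_elem_finite[OF finite_Diff[OF fin] MM] nin[OF MM]]) simp
    qed
    finally show "(\<Sum>M\<in>insert (j,x) ` perfect_matchings (S - {x,j}). \<Prod>p\<in>M. C (fst p) (snd p))
        = C j x * hafS C (S - {x, j})"
      by (simp add: hafS_def sum_distrib_left)
  qed
  finally show ?thesis .
qed



lemma strict_mono_inv:
  assumes sm: "\<forall>a\<in>S. \<forall>b\<in>S. a < b \<longrightarrow> g a < (g b :: nat)" and bij: "bij_betw g S S'"
  shows "\<forall>a\<in>S'. \<forall>b\<in>S'. a < b \<longrightarrow> inv_into S g a < (inv_into S g b :: nat)"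
proof (intro ballI impI)
  fix a b assume a: "a \<in> S'" and b: "b \<in> S'" and ab: "a < b"
  have ia: "inv_into S g a \<in> S" "g (inv_into S g a) = a"
    using a bij by (auto simp: bij_betw_def inv_into_into f_inv_into_f)
  have ib: "inv_into S g b \<in> S" "g (inv_into S g b) = b"
    using b bij by (auto simp: bij_betw_def inv_into_into f_inv_into_f)
  show "inv_into S g a < inv_into S g b"
  proof (rule ccontr)
    assume "\<not> ?thesis"
    then have "inv_into S g b < inv_into S g a \<or> inv_into S g b = inv_into S g a" by auto
    then show False
    proof
      assume "inv_into S g b < inv_into S g a"
      then have "g (inv_into S g b) < g (inv_into S g a)" using sm ia ib by blast
      then show False using ia ib ab by simp
    next
      assume "inv_into S g b = inv_into S g a"
      then have "g (inv_into S g b) = g (inv_into S g a)" by simp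
      then show False using ia ib ab by simp
    qed
  qed
qed

definition pmap :: "(nat \<Rightarrow> nat) \<Rightarrow> (nat \<times> nat) set \<Rightarrow> (nat \<times> nat) set" where
  "pmap g M = (\<lambda>p. (g (fst p), g (snd p))) ` M"

lemma pm_map:
  assumes sm: "\<forall>a\<in>S. \<forall>b\<in>S. a < b \<longrightarrow> g a < (g b :: nat)" and bij: "bij_betw g S S'"
    and M: "M \<in> perfect_matchings S"
  shows "pmap g M \<in> perfect_matchings S'"
proof -
  have Msub: "M \<subseteq> {(i, j). i \<in> S \<and> j \<in> S \<and> i < j}" by (rule pm_D1[OF M])
  have uq: "\<forall>y\<in>S. \<exists>!p. p \<in> M \<and> (fst p = y \<or> snd p = y)" by (rule pm_D2[OF M])
  have inj: "inj_on g S" and im: "g ` S = S'" using bij by (auto simp: bij_betw_def)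
  show ?thesis
    unfolding perfect_matchings_def
  proof (intro CollectI conjI ballI)
    show "pmap g M \<subseteq> {(i, j). i \<in> S' \<and> j \<in> S' \<and> i < j}"
    proof
      fix r assume "r \<in> pmap g M"
      then obtain a b where r: "r = (g a, g b)" and abM: "(a, b) \<in> M" unfolding pmap_def by auto
      then have "a \<in> S" "b \<in> S" "a < b" using Msub by auto
      then show "r \<in> {(i, j). i \<in> S' \<and> j \<in> S' \<and> i < j}" using r sm im by auto
    qed
  next
    fix y assume "y \<in> S'"
    then obtain z where z: "z \<in> S" "y = g z" using im by auto
    have uz: "\<exists>!p. p \<in> M \<and> (fst p = z \<or> snd p = z)" using bspec[OF uq z(1)] .
    obtain q where q: "q \<in> M \<and> (fst q = z \<or> snd q = z)"
      and qu: "\<And>r. r \<in> M \<and> (fst r = z \<or> snd r = z) \<Longrightarrow> r = q"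
      by (rule ex1_obt[OF uz]) (rule that; assumption)
    show "\<exists>!p. p \<in> pmap g M \<and> (fst p = y \<or> snd p = y)"
    proof (rule ex1I[of _ "(g (fst q), g (snd q))"])
      show "(g (fst q), g (snd q)) \<in> pmap g M \<and> (fst (g (fst q), g (snd q)) = y \<or> snd (g (fst q), g (snd q)) = y)"
        using q z unfolding pmap_def by auto
      fix r assume r: "r \<in> pmap g M \<and> (fst r = y \<or> snd r = y)"
      then obtain a b where rab: "r = (g a, g b)" and abM: "(a, b) \<in> M" unfolding pmap_def by auto
      then have abS: "a \<in> S" "b \<in> S" using Msub by auto
      have "g a = g z \<or> g b = g z" using r rab z by auto
      then have "a = z \<or> b = z" using inj abS z(1) by (auto dest: inj_onD)
      then have "(a, b) = q" using qu abM by auto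
      then show "r = (g (fst q), g (snd q))" using rab by auto
    qed
  qed
qed

lemma pmap_inv:
  assumes bij: "bij_betw g S S'" and M: "M \<subseteq> S \<times> S"
  shows "pmap (inv_into S g) (pmap g M) = M"
proof -
  have "\<And>a. a \<in> S \<Longrightarrow> inv_into S g (g a) = a" using bij by (simp add: bij_betw_def)
  then have "\<And>p. p \<in> M \<Longrightarrow> (inv_into S g (g (fst p)), inv_into S g (g (snd p))) = p"
    using M by auto
  then show ?thesis unfolding pmap_def image_image by simp
qed

lemma hafS_reindex:
  assumes sm: "\<forall>a\<in>S. \<forall>b\<in>S. a < b \<longrightarrow> g a < (g b :: nat)" and bij: "bij_betw g S S'"
  shows "hafS (\<lambda>i j. C (g i) (g j)) S = hafS C S'"
proof -
  let ?h = "inv_into S g"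
  have bij2: "bij_betw ?h S' S" using bij by (rule bij_betw_inv_into)
  have sm2: "\<forall>a\<in>S'. \<forall>b\<in>S'. a < b \<longrightarrow> ?h a < ?h b" using strict_mono_inv[OF sm bij] .
  have hg: "inv_into S' ?h x = g x" if x: "x \<in> S" for x
  proof -
    have "g x \<in> S'" using bij x bij_betwE by blast
    moreover have "?h (g x) = x" using bij x by (simp add: bij_betw_def)
    moreover have "inj_on ?h S'" using bij2 by (simp add: bij_betw_def)
    ultimately show ?thesis by (metis inv_into_f_f)
  qed
  have inj: "inj_on g S" using bij by (auto simp: bij_betw_def)
  have B: "bij_betw (pmap g) (perfect_matchings S) (perfect_matchings S')"
  proof (rule bij_betw_byWitness[where f' = "pmap ?h"])
    show "\<forall>a\<in>perfect_matchings S. pmap ?h (pmap g a) = a"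
      using pmap_inv[OF bij] pm_sub by blast
    show "\<forall>a\<in>perfect_matchings S'. pmap g (pmap ?h a) = a"
    proof
      fix M assume M: "M \<in> perfect_matchings S'"
      have "pmap (inv_into S' ?h) (pmap ?h M) = M" using pmap_inv[OF bij2 pm_sub[OF M]] .
      moreover have "pmap (inv_into S' ?h) (pmap ?h M) = pmap g (pmap ?h M)"
      proof -
        have "pmap ?h M \<subseteq> S \<times> S" using pm_sub[OF pm_map[OF sm2 bij2 M]] .
        then show ?thesis unfolding pmap_def using hg by (intro image_cong refl) auto
      qed
      ultimately show "pmap g (pmap ?h M) = M" by simp
    qed
    show "pmap g ` perfect_matchings S \<subseteq> perfect_matchings S'"
      using pm_map[OF sm bij] by blast
    show "pmap ?h ` perfect_matchings S' \<subseteq> perfect_matchings S"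
      using pm_map[OF sm2 bij2] by blast
  qed
  have "hafS C S' = (\<Sum>M\<in>perfect_matchings S. \<Prod>p\<in>pmap g M. C (fst p) (snd p))"
    unfolding hafS_def by (rule sum.reindex_bij_betw[OF B, symmetric])
  also have "\<dots> = (\<Sum>M\<in>perfect_matchings S. \<Prod>p\<in>M. C (g (fst p)) (g (snd p)))"
  proof (rule sum.cong[OF refl])
    fix M assume M: "M \<in> perfect_matchings S"
    have "inj_on (\<lambda>p. (g (fst p), g (snd p))) M"
    proof (rule inj_onI)
      fix p q assume "p \<in> M" "q \<in> M" "(g (fst p), g (snd p)) = (g (fst q), g (snd q))"
      moreover have "fst p \<in> S" "snd p \<in> S" "fst q \<in> S" "snd q \<in> S"
        using pm_sub[OF M] \<open>p \<in> M\<close> \<open>q \<in> M\<close> by auto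
      ultimately show "p = q" using inj by (simp add: prod_eq_iff inj_on_eq_iff)
    qed
    then show "(\<Prod>p\<in>pmap g M. C (fst p) (snd p)) = (\<Prod>p\<in>M. C (g (fst p)) (g (snd p)))"
      unfolding pmap_def by (simp add: prod.reindex)
  qed
  finally show ?thesis unfolding hafS_def by simp
qed



lemma principal_hafS:
  assumes fin: "finite \<alpha>" and c: "card \<alpha> = r"
  shows "haf r (principal_submatrix A \<alpha>) = hafS A \<alpha>"
proof -
  let ?xs = "sorted_list_of_set \<alpha>"
  define f where "f i = ?xs ! (i - 1)" for i
  have len: "length ?xs = r" using c by simp
  have ss: "sorted_wrt (<) ?xs" using fin by simp
  have sm: "\<forall>a\<in>{1..r}. \<forall>b\<in>{1..r}. a < b \<longrightarrow> f a < f b"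
  proof (intro ballI impI)
    fix a b assume "a \<in> {1..r}" "b \<in> {1..r}" "a < b"
    then show "f a < f b" unfolding f_def using ss len by (auto intro: sorted_wrt_nth_less)
  qed
  have inj: "inj_on f {1..r}"
  proof (rule inj_onI)
    fix a b assume "a \<in> {1..r}" "b \<in> {1..r}" "f a = f b"
    then show "a = b" using sm by (metis less_irrefl linorder_neqE_nat)
  qed
  have im: "f ` {1..r} = \<alpha>"
  proof -
    have "f ` {1..r} = set ?xs"
    proof (intro equalityI subsetI)
      fix y assume "y \<in> f ` {1..r}"
      then obtain i where "i \<in> {1..r}" "y = ?xs ! (i - 1)" unfolding f_def by auto
      then show "y \<in> set ?xs" using len by auto
    next
      fix y assume "y \<in> set ?xs"
      then obtain i where i: "i < r" "y = ?xs ! i" using len by (auto simp: in_set_conv_nth)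
      then have "y = f (Suc i)" "Suc i \<in> {1..r}" unfolding f_def by auto
      then show "y \<in> f ` {1..r}" by blast
    qed
    then show ?thesis using fin by simp
  qed
  have "principal_submatrix A \<alpha> = (\<lambda>i j. A (f i) (f j))"
    by (intro ext) (simp add: principal_submatrix_def f_def)
  then show ?thesis
    using hafS_reindex[OF sm, of \<alpha> A] inj im by (simp add: haf_hafS bij_betw_def)
qed



lemma block_main:
  "\<forall>U W. finite W \<longrightarrow> card W = n \<longrightarrow> W \<subseteq> {m<..} \<longrightarrow> U \<subseteq> {1..m} \<longrightarrow> n \<le> card U \<longrightarrow>
     hafS (block_Ak m A) (U \<union> W) = fact n * (\<Sum>\<alpha>\<in>{\<alpha>. \<alpha> \<subseteq> U \<and> card \<alpha> = card U - n}. hafS A \<alpha>)"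
proof (induction n)
  case 0
  show ?case
  proof (intro allI impI)
    fix U W :: "nat set"
    assume W: "finite W" "card W = 0" and U: "U \<subseteq> {1..m}"
    have W0: "W = {}" using W by simp
    have finU: "finite U" using U finite_subset by blast
    have "hafS (block_Ak m A) U = hafS A U"
      unfolding hafS_def
    proof (intro sum.cong refl prod.cong)
      fix M p assume MU: "M \<in> perfect_matchings U" and pM: "p \<in> M"
      have "fst p \<in> U" "snd p \<in> U" using pm_sub[OF MU] pM by auto
      then show "block_Ak m A (fst p) (snd p) = A (fst p) (snd p)"
        using U by (auto simp: block_Ak_def)
    qed
    moreover have "{\<alpha>. \<alpha> \<subseteq> U \<and> card \<alpha> = card U - 0} = {U}"
      using finU card_subset_eq by auto
    ultimately show "hafS (block_Ak m A) (U \<union> W) = fact 0 * (\<Sum>\<alpha>\<in>{\<alpha>. \<alpha> \<subseteq> U \<and> card \<alpha> = card U - 0}. hafS A \<alpha>)"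
      using W0 by simp
  qed
next
  case (Suc n)
  show ?case
  proof (intro allI impI)
    fix U W :: "nat set"
    assume finW: "finite W" and cW: "card W = Suc n" and Wm: "W \<subseteq> {m<..}" and U: "U \<subseteq> {1..m}"
      and cU: "Suc n \<le> card U"
    let ?B = "block_Ak m A"
    let ?c = "card U - Suc n"
    let ?Q = "{\<alpha>. \<alpha> \<subseteq> U \<and> card \<alpha> = ?c}"
    have finU: "finite U" using U finite_subset by blast
    have Wne: "W \<noteq> {}" using cW by auto
    define w where "w = Max W"
    have wW: "w \<in> W" using finW Wne w_def by simp
    have wm: "m < w" using wW Wm by auto
    have mx: "\<forall>y\<in>U \<union> W. y \<le> w" using U finW w_def wm by fastforce
    have disj: "U \<inter> (W - {w}) = {}" using U Wm by fastforce
    have e1: "(U \<union> W) - {w} = U \<union> (W - {w})" using disj wW U wm by auto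
    have "hafS ?B (U \<union> W) = (\<Sum>j\<in>(U \<union> W) - {w}. ?B j w * hafS ?B ((U \<union> W) - {w, j}))"
      by (rule hafS_expand) (use finU finW wW mx in auto)
    also have "\<dots> = (\<Sum>j\<in>U. ?B j w * hafS ?B ((U \<union> W) - {w, j}))
                  + (\<Sum>j\<in>W - {w}. ?B j w * hafS ?B ((U \<union> W) - {w, j}))"
      unfolding e1 by (rule sum.union_disjoint) (use finU finW disj in auto)
    also have "(\<Sum>j\<in>W - {w}. ?B j w * hafS ?B ((U \<union> W) - {w, j})) = 0"
    proof (rule sum.neutral, intro ballI)
      fix j assume "j \<in> W - {w}"
      then have "m < j" using Wm by auto
      then show "?B j w * hafS ?B ((U \<union> W) - {w, j}) = 0" using wm by (simp add: block_Ak_def)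
    qed
    also have "(\<Sum>j\<in>U. ?B j w * hafS ?B ((U \<union> W) - {w, j}))
             = (\<Sum>j\<in>U. fact n * (\<Sum>\<alpha>\<in>?Q. if j \<notin> \<alpha> then hafS A \<alpha> else 0))"
    proof (rule sum.cong[OF refl])
      fix j assume jU: "j \<in> U"
      have Bj: "?B j w = 1" using jU U wm by (auto simp: block_Ak_def)
      have e2: "(U \<union> W) - {w, j} = (U - {j}) \<union> (W - {w})" using disj wW jU U wm by auto
      have "hafS ?B ((U - {j}) \<union> (W - {w}))
          = fact n * (\<Sum>\<alpha>\<in>{\<alpha>. \<alpha> \<subseteq> U - {j} \<and> card \<alpha> = card (U - {j}) - n}. hafS A \<alpha>)"
      proof (rule Suc.IH[rule_format, of "W - {w}" "U - {j}"])
        show "finite (W - {w})" using finW by simp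
        show "card (W - {w}) = n" using finW cW wW by (simp add: card_Diff_singleton)
        show "W - {w} \<subseteq> {m<..}" using Wm by auto
        show "U - {j} \<subseteq> {1..m}" using U by auto
        show "n \<le> card (U - {j})" using finU jU cU by (simp add: card_Diff_singleton)
      qed
      also have "card (U - {j}) - n = ?c" using finU jU by (simp add: card_Diff_singleton)
      also have "{\<alpha>. \<alpha> \<subseteq> U - {j} \<and> card \<alpha> = ?c} = {\<alpha> \<in> ?Q. j \<notin> \<alpha>}" by auto
      also have "(\<Sum>\<alpha>\<in>{\<alpha> \<in> ?Q. j \<notin> \<alpha>}. hafS A \<alpha>) = (\<Sum>\<alpha>\<in>?Q. if j \<notin> \<alpha> then hafS A \<alpha> else 0)"
        by (rule sum.inter_filter) (use finU in simp)
      finally show "?B j w * hafS ?B ((U \<union> W) - {w, j}) = fact n * (\<Sum>\<alpha>\<in>?Q. if j \<notin> \<alpha> then hafS A \<alpha> else 0)"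
        using Bj e2 by simp
    qed
    also have "(\<Sum>j\<in>U. fact n * (\<Sum>\<alpha>\<in>?Q. if j \<notin> \<alpha> then hafS A \<alpha> else 0))
             = fact n * (\<Sum>\<alpha>\<in>?Q. \<Sum>j\<in>U. if j \<notin> \<alpha> then hafS A \<alpha> else 0)"
      by (simp add: sum_distrib_left[symmetric] sum.swap[of _ U])
    also have "(\<Sum>\<alpha>\<in>?Q. \<Sum>j\<in>U. if j \<notin> \<alpha> then hafS A \<alpha> else 0) = (\<Sum>\<alpha>\<in>?Q. of_nat (Suc n) * hafS A \<alpha>)"
    proof (rule sum.cong[OF refl])
      fix \<alpha> assume a: "\<alpha> \<in> ?Q"
      have cd: "card (U - \<alpha>) = Suc n"
      proof -
        have aU: "\<alpha> \<subseteq> U" and ca: "card \<alpha> = ?c" using a by auto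
        have "finite \<alpha>" using aU finU finite_subset by blast
        then have "card (U - \<alpha>) = card U - card \<alpha>" using aU by (rule card_Diff_subset)
        then show ?thesis using ca cU by simp
      qed
      have "(\<Sum>j\<in>U. if j \<notin> \<alpha> then hafS A \<alpha> else 0) = (\<Sum>j\<in>{j \<in> U. j \<notin> \<alpha>}. hafS A \<alpha>)"
        by (rule sum.inter_filter[symmetric]) (use finU in simp)
      also have "{j \<in> U. j \<notin> \<alpha>} = U - \<alpha>" by auto
      finally show "(\<Sum>j\<in>U. if j \<notin> \<alpha> then hafS A \<alpha> else 0) = of_nat (Suc n) * hafS A \<alpha>"
        using cd by simp
    qed
    finally show "hafS ?B (U \<union> W) = fact (Suc n) * (\<Sum>\<alpha>\<in>?Q. hafS A \<alpha>)"
      by (simp add: sum_distrib_left[symmetric])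
  qed
qed

theorem theorem3p1:
  fixes m k :: nat and A :: "nat \<Rightarrow> nat \<Rightarrow> real"
  assumes "m \<ge> 2"
    and "\<forall>i\<in>{1..m}. \<forall>j\<in>{1..m}. A i j = A j i"
    and "\<forall>i\<in>{1..m}. A i i = 0"
    and "\<forall>i\<in>{1..m}. \<forall>j\<in>{1..m}. A i j \<ge> 0"
    and "1 \<le> k" and "k \<le> m div 2"
  shows "haf_k m k A = haf (2 * m - 2 * k) (block_Ak m A) / fact (m - 2 * k)"
proof -
  have km: "2 * k \<le> m" using assms(6) by auto
  have hk: "haf_k m k A = (\<Sum>\<alpha>\<in>Q_sets (2 * k) m. hafS A \<alpha>)"
    unfolding haf_k_def
  proof (rule sum.cong[OF refl])
    fix \<alpha> assume "\<alpha> \<in> Q_sets (2 * k) m"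
    then have "finite \<alpha>" "card \<alpha> = 2 * k" unfolding Q_sets_def by (auto intro: finite_subset)
    then show "haf (2 * k) (principal_submatrix A \<alpha>) = hafS A \<alpha>" by (rule principal_hafS)
  qed
  have U: "{1..2 * m - 2 * k} = {1..m} \<union> {m<..2 * m - 2 * k}" using km by auto
  have "hafS (block_Ak m A) ({1..m} \<union> {m<..2 * m - 2 * k})
      = fact (m - 2 * k) * (\<Sum>\<alpha>\<in>{\<alpha>. \<alpha> \<subseteq> {1..m} \<and> card \<alpha> = card {1..m} - (m - 2 * k)}. hafS A \<alpha>)"
    by (rule block_main[of "m - 2 * k" m A, rule_format, of "{m<..2 * m - 2 * k}" "{1..m}"]) (use km in auto)
  also have "{\<alpha>. \<alpha> \<subseteq> {1..m} \<and> card \<alpha> = card {1..m} - (m - 2 * k)} = Q_sets (2 * k) m"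
    using km by (auto simp: Q_sets_def)
  finally have "haf (2 * m - 2 * k) (block_Ak m A) = fact (m - 2 * k) * haf_k m k A"
    using hk U by (simp add: haf_hafS)
  then show ?thesis by simp
qed


end
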